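(* Let $\mu$ be a positive Borel measure on $\mathbb{C}$ with infinite support and finite moments, with moment matrix $\mathbf{M}=(c_{i,j})_{i,j\ge0}$, $c_{i,j}=\int z^i\bar z^j\,d\mu$, and assume $\lim_{n\to\infty} c_{n,n}^{1/(2n)}<\infty$. Let $\mathbf{M}'=(c_{i+1,j})_{i,j\ge0}$ be the infinite matrix obtained from $\mathbf{M}$ by removing its first row. Then $$\overline{\left\{\frac{v\mathbf{M}'v^*}{v\mathbf{M}v^*}: v\in c_{00}\setminus\{0\}\right\}}=\operatorname{Co}(\operatorname{supp}(\mu)).$$
   Context: $c_{00}$ is the space of complex row sequences with finitely many nonzero entries; $v^*$ denotes the conjugate transpose. $\operatorname{Co}(S)$ denotes the convex hull of $S\subset\mathbb{C}$. *)

theory Defs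
  imports "HOL-Analysis.Analysis"
begin

definition measure_support :: "complex measure \<Rightarrow> complex set" where
  "measure_support \<mu> = {z. \<forall>e>0. emeasure \<mu> (ball z e) > 0}"

definition cmoment :: "complex measure \<Rightarrow> nat \<Rightarrow> nat \<Rightarrow> complex" where
  "cmoment \<mu> i j = (LINT z|\<mu>. z ^ i * cnj z ^ j)"

definition c00 :: "(nat \<Rightarrow> complex) set" where
  "c00 = {v. finite {i. v i \<noteq> 0}}"

definition quad_form :: "(nat \<Rightarrow> nat \<Rightarrow> complex) \<Rightarrow> (nat \<Rightarrow> complex) \<Rightarrow> complex" where
  "quad_form A v = (\<Sum>i\<in>{i. v i \<noteq> 0}. \<Sum>j\<in>{j. v j \<noteq> 0}. v i * A i j * cnj (v j))"

end

theory Submission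
  imports Defs
begin
locale M0 =
  fixes \<mu> :: "complex measure"
  assumes borel: "sets \<mu> = sets borel"
    and fin: "emeasure \<mu> UNIV < \<infinity>"
begin

lemma space_mu[simp]: "space \<mu> = UNIV"
  using sets_eq_imp_space_eq[OF borel] by simp

lemma sets_mu[measurable_cong, simp]: "sets \<mu> = sets borel" by (rule borel)

lemma finite_measure: "finite_measure \<mu>"
  by (rule finite_measureI) (use fin in simp)

lemma meas_cont: "continuous_on UNIV f \<Longrightarrow> f \<in> borel_measurable \<mu>"
  using borel_measurable_continuous_onI[of f] measurable_cong_sets[OF borel refl]
  by simp

lemma supp_closed: "closed (measure_support \<mu>)"
proof -
  have "open (- measure_support \<mu>)"
  proof (rule openI)
    fix z assume "z \<in> - measure_support \<mu>"
    then obtain e where e: "e > 0" "\<not> emeasure \<mu> (ball z e) > 0"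
      by (auto simp: measure_support_def)
    have "ball z e \<subseteq> - measure_support \<mu>"
    proof
      fix y assume y: "y \<in> ball z e"
      define d where "d = e - dist z y"
      have d: "d > 0" "ball y d \<subseteq> ball z e" using y unfolding d_def ball_def
        by (auto, smt (verit) dist_commute dist_triangle)
      have "emeasure \<mu> (ball y d) \<le> emeasure \<mu> (ball z e)"
        by (rule emeasure_mono[OF d(2)]) simp
      then have "\<not> emeasure \<mu> (ball y d) > 0" using e(2) by (simp add: not_less)
      then show "y \<in> - measure_support \<mu>" using d by (auto simp: measure_support_def)
    qed
    then show "\<exists>e>0. ball z e \<subseteq> - measure_support \<mu>" using e by blast
  qed
  then show ?thesis by (simp add: closed_def)
qed

lemma compl_supp_null: "- measure_support \<mu> \<in> null_sets \<mu>"
proof -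
  define F where "F = {ball z e | z e. e > 0 \<and> emeasure \<mu> (ball z e) = 0}"
  have "\<And>S. S \<in> F \<Longrightarrow> open S" by (auto simp: F_def)
  then obtain F' where F': "F' \<subseteq> F" "countable F'" "\<Union>F' = \<Union>F" by (rule Lindelof)
  have "\<Union>F = - measure_support \<mu>"
  proof
    show "\<Union>F \<subseteq> - measure_support \<mu>"
    proof
      fix x assume "x \<in> \<Union>F"
      then obtain z e where ze: "e > 0" "emeasure \<mu> (ball z e) = 0" "x \<in> ball z e" by (auto simp: F_def)
      define d where "d = e - dist z x"
      have d: "d > 0" "ball x d \<subseteq> ball z e" using ze(3) unfolding d_def ball_def
        by (auto, smt (verit) dist_commute dist_triangle)
      have "emeasure \<mu> (ball x d) \<le> emeasure \<mu> (ball z e)"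
        by (rule emeasure_mono[OF d(2)]) simp
      then show "x \<in> - measure_support \<mu>" using d ze(2) by (auto simp: measure_support_def)
    qed
    show "- measure_support \<mu> \<subseteq> \<Union>F"
    proof
      fix x assume "x \<in> - measure_support \<mu>"
      then obtain e where "e > 0" "\<not> emeasure \<mu> (ball x e) > 0" by (auto simp: measure_support_def)
      then have "ball x e \<in> F" by (auto simp: F_def not_less)
      then show "x \<in> \<Union>F" using \<open>e > 0\<close> by (metis UnionI centre_in_ball)
    qed
  qed
  moreover have "(\<Union>S\<in>F'. S) \<in> null_sets \<mu>"
    by (rule null_sets_UN'[OF F'(2)]) (use F'(1) in \<open>auto simp: F_def null_sets_def\<close>)
  ultimately show ?thesis using F'(3) by simp
qed

lemma AE_supp: "AE z in \<mu>. z \<in> measure_support \<mu>"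
  by (rule AE_I'[OF compl_supp_null]) auto

end

context M0 begin

lemma cmoment_diag: "cmoment \<mu> n n = of_real (\<integral>z. cmod z ^ (2*n) \<partial>\<mu>)"
proof -
  have "\<And>z::complex. z ^ n * cnj z ^ n = of_real (cmod z ^ (2*n))"
    by (metis complex_norm_square power_mult power_mult_distrib of_real_power mult.commute)
  then have eq: "(\<lambda>z::complex. z ^ n * cnj z ^ n) = (\<lambda>z. of_real (cmod z ^ (2*n)))" by auto
  show ?thesis unfolding cmoment_def eq by (rule integral_complex_of_real)
qed

lemma supp_bounded:
  assumes moments: "\<forall>n. integrable \<mu> (\<lambda>z. cmod z ^ n)"
    and lim: "(\<lambda>n. root (2 * n) (Re (cmoment \<mu> n n))) \<longlonglongrightarrow> L"
  shows "measure_support \<mu> \<subseteq> cball 0 L"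
proof
  interpret finite_measure \<mu> by (rule finite_measure)
  fix z0 assume z0: "z0 \<in> measure_support \<mu>"
  show "z0 \<in> cball 0 L"
  proof (rule ccontr)
    assume "z0 \<notin> cball 0 L"
    then have zL: "cmod z0 > L" by simp
    have L0: "L \<ge> 0"
    proof (rule LIMSEQ_le_const[OF lim], intro exI allI impI)
      fix n show "0 \<le> root (2 * n) (Re (cmoment \<mu> n n))"
        unfolding cmoment_diag Re_complex_of_real by (intro real_root_ge_zero integral_nonneg_AE) auto
    qed
    define e where "e = (cmod z0 - L) / 2"
    define \<rho> where "\<rho> = cmod z0 - e"
    have e: "e > 0" and \<rho>: "\<rho> > L" "\<rho> > 0" using zL L0 unfolding e_def \<rho>_def by (auto simp: field_simps)
    have pos: "emeasure \<mu> (ball z0 e) > 0" using z0 e by (auto simp: measure_support_def)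
    define m where "m = measure \<mu> (ball z0 e)"
    have m: "m > 0" using pos by (simp add: m_def emeasure_eq_measure)
    have low: "\<rho> * root (2*n) m \<le> root (2 * n) (Re (cmoment \<mu> n n))" if n: "n \<ge> 1" for n
    proof -
      have "(\<integral>z. \<rho>^(2*n) * indicator (ball z0 e) z \<partial>\<mu>) \<le> (\<integral>z. cmod z ^ (2*n) \<partial>\<mu>)"
      proof (rule integral_mono)
        show "integrable \<mu> (\<lambda>z. \<rho>^(2*n) * indicator (ball z0 e) z)"
          by (intro integrable_mult_right integrable_indicator) (auto simp: emeasure_eq_measure)
        show "integrable \<mu> (\<lambda>z. cmod z ^ (2*n))" using moments by simp
        fix z
        show "\<rho>^(2*n) * indicator (ball z0 e) z \<le> cmod z ^ (2*n)"
        proof (cases "z \<in> ball z0 e")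
          case True
          then have "\<rho> \<le> cmod z" using norm_triangle_ineq2[of z0 z]
            by (simp add: \<rho>_def dist_norm)
          then show ?thesis using True \<rho> by (simp add: power_mono)
        qed simp
      qed
      then have "\<rho>^(2*n) * m \<le> Re (cmoment \<mu> n n)" by (simp add: cmoment_diag m_def)
      then have "root (2*n) (\<rho>^(2*n) * m) \<le> root (2 * n) (Re (cmoment \<mu> n n))"
        using n by (simp add: real_root_le_iff)
      moreover have "root (2*n) (\<rho>^(2*n) * m) = \<rho> * root (2*n) m"
        using n \<rho> by (simp add: real_root_mult real_root_power_cancel)
      ultimately show ?thesis by simp
    qed
    have r1: "(\<lambda>n. root (2*n) m) \<longlonglongrightarrow> 1"
    proof -
      have "(\<lambda>n. root n m) \<longlonglongrightarrow> 1" using m by (rule LIMSEQ_root_const)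
      moreover have "filterlim (\<lambda>n::nat. 2*n) sequentially sequentially"
        by (rule filterlim_subseq) (simp add: strict_mono_def)
      ultimately show ?thesis by (rule filterlim_compose)
    qed
    have "\<rho> * 1 \<le> L"
      by (rule LIMSEQ_le[OF tendsto_mult[OF tendsto_const r1] lim]) (use low in auto)
    then show False using \<rho> by simp
  qed
qed

end

definition P :: "(nat \<Rightarrow> complex) \<Rightarrow> complex \<Rightarrow> complex" where
  "P v z = (\<Sum>i\<in>{i. v i \<noteq> 0}. v i * z ^ i)"

lemma c00_bound: "v \<in> c00 \<Longrightarrow> \<exists>n. {i. v i \<noteq> 0} \<subseteq> {..<n}"
  by (simp add: c00_def finite_nat_iff_bounded)

lemma P_eq: "v \<in> c00 \<Longrightarrow> {i. v i \<noteq> 0} \<subseteq> {..<n} \<Longrightarrow> P v z = (\<Sum>i<n. v i * z ^ i)"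
  unfolding P_def by (rule sum.mono_neutral_left) auto

lemma P_cont: "continuous_on UNIV (P v)"
  unfolding P_def by (intro continuous_intros)

lemma c00_lin: "x \<in> c00 \<Longrightarrow> y \<in> c00 \<Longrightarrow> (\<lambda>i. a * x i + b * y i) \<in> c00"
proof -
  assume "x \<in> c00" "y \<in> c00"
  then have "finite ({i. x i \<noteq> 0} \<union> {i. y i \<noteq> 0})" by (simp add: c00_def)
  moreover have "{i. a * x i + b * y i \<noteq> 0} \<subseteq> {i. x i \<noteq> 0} \<union> {i. y i \<noteq> 0}" by auto
  ultimately show ?thesis unfolding c00_def using finite_subset by auto
qed

lemma P_lin: "x \<in> c00 \<Longrightarrow> y \<in> c00 \<Longrightarrow> P (\<lambda>i. a * x i + b * y i) z = a * P x z + b * P y z"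
proof -
  assume x: "x \<in> c00" and y: "y \<in> c00"
  obtain n1 where n1: "{i. x i \<noteq> 0} \<subseteq> {..<n1}" using c00_bound[OF x] by blast
  obtain n2 where n2: "{i. y i \<noteq> 0} \<subseteq> {..<n2}" using c00_bound[OF y] by blast
  define n where "n = max n1 n2"
  have s1: "{i. x i \<noteq> 0} \<subseteq> {..<n}" "{i. y i \<noteq> 0} \<subseteq> {..<n}" using n1 n2 by (auto simp: n_def)
  have s3: "{i. a * x i + b * y i \<noteq> 0} \<subseteq> {..<n}"
  proof
    fix i assume i: "i \<in> {i. a * x i + b * y i \<noteq> 0}"
    show "i \<in> {..<n}" using s1 i by (cases "x i = 0"; cases "y i = 0") auto
  qed
  show ?thesis
    using P_eq[OF c00_lin[OF x y] s3] P_eq[OF x s1(1)] P_eq[OF y s1(2)]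
    by (simp add: sum.distrib sum_distrib_left algebra_simps)
qed

locale M1 = M0 +
  fixes L :: real
  assumes bnd: "measure_support \<mu> \<subseteq> cball 0 L"
    and infsupp: "infinite (measure_support \<mu>)"
begin

lemma supp_compact: "compact (measure_support \<mu>)"
  using bnd supp_closed by (metis bounded_cball bounded_subset compact_eq_bounded_closed)

lemma hull_compact: "compact (convex hull measure_support \<mu>)"
  by (rule compact_convex_hull[OF supp_compact])

lemma AE_cball: "AE z in \<mu>. z \<in> cball 0 L"
  using AE_supp by (rule AE_mp) (rule AE_I2, use bnd in auto)

lemma int_cont:
  fixes f :: "complex \<Rightarrow> 'b::{banach,second_countable_topology}"
  assumes "continuous_on UNIV f"
  shows "integrable \<mu> f"
proof -
  interpret finite_measure \<mu> by (rule finite_measure)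
  have "compact (f ` cball 0 L)"
    by (rule compact_continuous_image) (use assms continuous_on_subset in auto)
  then obtain B where B: "\<forall>x\<in>f ` cball 0 L. norm x \<le> B"
    using compact_imp_bounded bounded_iff by metis
  have "AE z in \<mu>. norm (f z) \<le> B" using AE_cball by (rule AE_mp) (use B in auto)
  then show ?thesis by (rule integrable_const_bound) (rule meas_cont[OF assms])
qed

lemma int_pos:
  fixes g :: "complex \<Rightarrow> real"
  assumes cont: "continuous_on UNIV g" and nn: "\<And>z. g z \<ge> 0"
    and z0: "z0 \<in> measure_support \<mu>" and gz: "g z0 > 0"
  shows "(\<integral>z. g z \<partial>\<mu>) > 0"
proof -
  interpret finite_measure \<mu> by (rule finite_measure)
  have "open {z. g z0 / 2 < g z}" by (rule open_Collect_less) (use cont in \<open>auto intro: continuous_intros\<close>)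
  moreover have "z0 \<in> {z. g z0 / 2 < g z}" using gz by simp
  ultimately obtain e where e: "e > 0" "ball z0 e \<subseteq> {z. g z0 / 2 < g z}"
    by (meson open_contains_ball)
  have pos: "emeasure \<mu> (ball z0 e) > 0" using z0 e by (auto simp: measure_support_def)
  have m: "measure \<mu> (ball z0 e) > 0" using pos by (simp add: emeasure_eq_measure)
  have "(\<integral>z. (g z0 / 2) * indicator (ball z0 e) z \<partial>\<mu>) \<le> (\<integral>z. g z \<partial>\<mu>)"
  proof (rule integral_mono)
    show "integrable \<mu> (\<lambda>z. (g z0 / 2) * indicator (ball z0 e) z)"
      by (intro integrable_mult_right integrable_indicator) (auto simp: emeasure_eq_measure)
    show "integrable \<mu> g" by (rule int_cont[OF cont])
    fix z show "g z0 / 2 * indicator (ball z0 e) z \<le> g z"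
      using e(2) nn[of z] by (cases "z \<in> ball z0 e") auto
  qed
  moreover have "(\<integral>z. (g z0 / 2) * indicator (ball z0 e) z \<partial>\<mu>) > 0"
    using m gz by simp
  ultimately show ?thesis by linarith
qed

definition Nr :: "(nat \<Rightarrow> complex) \<Rightarrow> real" where
  "Nr v = (\<integral>z. cmod (P v z) ^ 2 \<partial>\<mu>)"
definition Ac :: "(nat \<Rightarrow> complex) \<Rightarrow> complex" where
  "Ac v = (\<integral>z. z * P v z * cnj (P v z) \<partial>\<mu>)"
definition R :: "(nat \<Rightarrow> complex) \<Rightarrow> complex" where
  "R v = Ac v / of_real (Nr v)"

lemma Nc: "(\<integral>z. P v z * cnj (P v z) \<partial>\<mu>) = of_real (Nr v)"
  by (simp add: Nr_def complex_norm_square[symmetric] del: of_real_power)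

lemma Nr_pos: assumes v: "v \<in> c00" "v \<noteq> (\<lambda>_. 0)" shows "Nr v > 0"
proof -
  obtain n where n: "{i. v i \<noteq> 0} \<subseteq> {..<n}" using c00_bound[OF v(1)] by blast
  obtain k where k: "v k \<noteq> 0" using v(2) by auto
  have kn: "k \<le> n" using n k by auto
  have fin: "finite {z. (\<Sum>i\<le>n. v i * z ^ i) = 0}"
    by (rule polyfun_roots_finite) (use k kn in auto)
  have "{z. P v z = 0} \<subseteq> {z. (\<Sum>i\<le>n. v i * z ^ i) = 0}"
  proof
    fix z assume "z \<in> {z. P v z = 0}"
    moreover have "P v z = (\<Sum>i<Suc n. v i * z ^ i)"
      by (rule P_eq[OF v(1)]) (use n in auto)
    then have "P v z = (\<Sum>i\<le>n. v i * z ^ i)" by (simp add: lessThan_Suc_atMost)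
    ultimately show "z \<in> {z. (\<Sum>i\<le>n. v i * z ^ i) = 0}" by simp
  qed
  then have "finite {z. P v z = 0}" using fin finite_subset by blast
  then obtain z0 where z0: "z0 \<in> measure_support \<mu>" "z0 \<notin> {z. P v z = 0}"
    using infsupp by (metis finite_subset subsetI)
  show ?thesis unfolding Nr_def
    by (rule int_pos[of _ z0]) (use z0 P_cont in \<open>auto intro!: continuous_intros\<close>)
qed

lemma qf_general:
  assumes "v \<in> c00"
  shows "quad_form (\<lambda>i j. \<integral>z. z ^ k * z ^ i * cnj z ^ j \<partial>\<mu>) v = (\<integral>z. z ^ k * P v z * cnj (P v z) \<partial>\<mu>)"
proof -
  define S where "S = {i. v i \<noteq> 0}"
  have pw: "z ^ k * P v z * cnj (P v z) = (\<Sum>i\<in>S. \<Sum>j\<in>S. v i * (z ^ k * z ^ i * cnj z ^ j) * cnj (v j))" for z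
    unfolding P_def S_def[symmetric] by (simp add: sum_distrib_left sum_distrib_right algebra_simps)
  have int: "integrable \<mu> (\<lambda>z. v i * (z ^ k * z ^ i * cnj z ^ j) * cnj (v j))" for i j
    by (rule int_cont) (intro continuous_intros)
  have "(\<integral>z. z ^ k * P v z * cnj (P v z) \<partial>\<mu>) = (\<integral>z. (\<Sum>i\<in>S. \<Sum>j\<in>S. v i * (z ^ k * z ^ i * cnj z ^ j) * cnj (v j)) \<partial>\<mu>)"
    by (simp only: pw)
  also have "\<dots> = (\<Sum>i\<in>S. \<Sum>j\<in>S. (\<integral>z. v i * (z ^ k * z ^ i * cnj z ^ j) * cnj (v j) \<partial>\<mu>))"
    using int by (simp add: integral_sum integrable_sum)
  also have "\<dots> = (\<Sum>i\<in>S. \<Sum>j\<in>S. v i * (\<integral>z. z ^ k * z ^ i * cnj z ^ j \<partial>\<mu>) * cnj (v j))"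
    by (simp add: integral_mult_left_zero integral_mult_right_zero)
  finally show ?thesis by (simp add: quad_form_def S_def)
qed

lemma qf_N: "v \<in> c00 \<Longrightarrow> quad_form (cmoment \<mu>) v = of_real (Nr v)"
  using qf_general[of v 0] Nc[of v] by (simp add: cmoment_def[abs_def])

lemma qf_A: "v \<in> c00 \<Longrightarrow> quad_form (\<lambda>i j. cmoment \<mu> (Suc i) j) v = Ac v"
  using qf_general[of v 1] by (simp add: cmoment_def[abs_def] Ac_def mult.assoc)

end

lemma P_cont'[continuous_intros]: "continuous_on S f \<Longrightarrow> continuous_on S (\<lambda>z. P v (f z))"
  using continuous_on_compose2[OF P_cont, of S f] by auto

context M1 begin

lemma Ac_scaleR: "Ac v = (\<integral>z. (cmod (P v z) ^ 2) *\<^sub>R z \<partial>\<mu>)"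
proof -
  have "z * P v z * cnj (P v z) = (cmod (P v z) ^ 2) *\<^sub>R z" for z
  proof -
    have "(cmod (P v z) ^ 2) *\<^sub>R z = P v z * cnj (P v z) * z"
      by (simp only: scaleR_conv_of_real complex_norm_square)
    then show ?thesis by (simp only: mult_ac)
  qed
  then show ?thesis by (simp add: Ac_def)
qed

lemma inner_R:
  assumes v: "v \<in> c00" "v \<noteq> (\<lambda>_. 0)"
  shows "inner a (R v) = (\<integral>z. cmod (P v z) ^ 2 * inner a z \<partial>\<mu>) / Nr v"
proof -
  have R: "R v = (1 / Nr v) *\<^sub>R Ac v" by (simp add: R_def scaleR_conv_of_real divide_inverse mult.commute)
  have ic: "integrable \<mu> (\<lambda>z. (cmod (P v z) ^ 2) *\<^sub>R z)"
    by (rule int_cont) (intro continuous_intros)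
  have "inner a (Ac v) = (\<integral>z. inner a ((cmod (P v z) ^ 2) *\<^sub>R z) \<partial>\<mu>)"
    unfolding Ac_scaleR using ic by (rule integral_inner_right[symmetric])
  also have "\<dots> = (\<integral>z. cmod (P v z) ^ 2 * inner a z \<partial>\<mu>)" by (simp only: inner_scaleR_right)
  finally show ?thesis unfolding R inner_scaleR_right by simp
qed

lemma R_in_hull:
  assumes v: "v \<in> c00" "v \<noteq> (\<lambda>_. 0)"
  shows "R v \<in> convex hull measure_support \<mu>"
proof (rule ccontr)
  assume nin: "R v \<notin> convex hull measure_support \<mu>"
  obtain a b where ab: "inner a (R v) < b" "\<forall>x\<in>convex hull measure_support \<mu>. inner a x > b"
    using separating_hyperplane_closed_point[OF convex_convex_hull compact_imp_closed[OF hull_compact] nin]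
    by auto
  have i1: "integrable \<mu> (\<lambda>z. cmod (P v z) ^ 2 * b)"
    by (rule int_cont) (intro continuous_intros)
  have i2: "integrable \<mu> (\<lambda>z. cmod (P v z) ^ 2 * inner a z)"
    by (rule int_cont) (intro continuous_intros)
  have ae: "AE z in \<mu>. cmod (P v z) ^ 2 * b \<le> cmod (P v z) ^ 2 * inner a z"
    using AE_supp
  proof (rule AE_mp, intro AE_I2 impI)
    fix z assume "z \<in> measure_support \<mu>"
    then have "z \<in> convex hull measure_support \<mu>" by (rule hull_inc)
    then have "inner a z > b" using ab(2) by simp
    then show "cmod (P v z) ^ 2 * b \<le> cmod (P v z) ^ 2 * inner a z"
      by (intro mult_left_mono) auto
  qed
  have "(\<integral>z. cmod (P v z) ^ 2 * b \<partial>\<mu>) \<le> (\<integral>z. cmod (P v z) ^ 2 * inner a z \<partial>\<mu>)"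
    by (rule integral_mono_AE[OF i1 i2 ae])
  moreover have "(\<integral>z. cmod (P v z) ^ 2 * b \<partial>\<mu>) = Nr v * b"
    unfolding Nr_def by (rule integral_mult_left_zero)
  ultimately have "Nr v * b \<le> (\<integral>z. cmod (P v z) ^ 2 * inner a z \<partial>\<mu>)"
    by linarith
  then have "b \<le> inner a (R v)"
    using Nr_pos[OF v] unfolding inner_R[OF v] by (simp add: pos_le_divide_eq mult.commute)
  then show False using ab(1) by simp
qed
end

lemma poly_pow:
  fixes K c :: complex
  assumes K: "K \<noteq> 0"
  shows "\<exists>v\<in>c00. v \<noteq> (\<lambda>_. 0) \<and> (\<forall>z. P v z = (K - c * z) ^ n)"
proof -
  define v where "v i = (if i \<le> n then of_nat (n choose i) * (-c) ^ i * K ^ (n - i) else 0)" for i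
  have sub: "{i. v i \<noteq> 0} \<subseteq> {..<Suc n}" by (auto simp: v_def split: if_splits)
  have c: "v \<in> c00" unfolding c00_def using sub finite_subset by auto
  have nz: "v \<noteq> (\<lambda>_. 0)"
  proof
    assume "v = (\<lambda>_. 0)"
    then have "v 0 = 0" by simp
    then show False using K by (simp add: v_def)
  qed
  have "P v z = (K - c * z) ^ n" for z
  proof -
    have "P v z = (\<Sum>i<Suc n. v i * z ^ i)" by (rule P_eq[OF c sub])
    also have "\<dots> = (\<Sum>i\<le>n. of_nat (n choose i) * (- c * z) ^ i * K ^ (n - i))"
      unfolding lessThan_Suc_atMost
    proof (rule sum.cong)
      fix i assume "i \<in> {..n}"
      then show "v i * z ^ i = of_nat (n choose i) * (- c * z) ^ i * K ^ (n - i)"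
        unfolding v_def power_mult_distrib by (simp add: mult_ac)
    qed simp
    also have "\<dots> = (- c * z + K) ^ n" by (rule binomial_ring[symmetric])
    finally show ?thesis by simp
  qed
  then show ?thesis using c nz by blast
qed

lemma re_cnj_inner: "Re (cnj a * z) = inner a z"
  by (simp add: inner_complex_def)

context M1 begin

lemma peak:
  assumes s: "s \<in> measure_support \<mu>" and sb: "inner a s < b"
  shows "\<exists>v\<in>c00. v \<noteq> (\<lambda>_. 0) \<and> inner a (R v) < b"
proof -
  interpret finite_measure \<mu> by (rule finite_measure)
  define \<delta> where "\<delta> = b - inner a s"
  have \<delta>: "\<delta> > 0" using sb by (simp add: \<delta>_def)
  have L0: "L \<ge> 0" using s bnd by (meson mem_cball_0 norm_ge_zero order_trans subsetD)
  define T where "T = cmod a * L"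
  have T0: "T \<ge> 0" using L0 by (simp add: T_def)
  define K where "K = \<bar>b\<bar> + T + T\<^sup>2 / \<delta> + 1"
  define \<epsilon> where "\<epsilon> = \<delta> / (2 * (cmod a + 1))"
  define A where "A = K - b + \<delta> / 2"
  define B2 where "B2 = (K - b)\<^sup>2 + T\<^sup>2"
  define Kb where "Kb = T + \<bar>b\<bar>"
  define m where "m = measure \<mu> (ball s \<epsilon>)"
  define M where "M = measure \<mu> UNIV"
  have \<epsilon>: "\<epsilon> > 0" unfolding \<epsilon>_def using \<delta> by (intro divide_pos_pos) (auto intro: add_nonneg_pos)
  have a\<epsilon>: "cmod a * \<epsilon> < \<delta> / 2"
  proof -
    have "cmod a * \<epsilon> = (\<delta> / 2) * (cmod a / (cmod a + 1))" by (simp add: \<epsilon>_def field_simps)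
    also have "\<dots> < (\<delta> / 2) * 1"
    proof (intro mult_strict_left_mono)
      have "cmod a + 1 > 0" by (simp add: add_nonneg_pos)
      then show "cmod a / (cmod a + 1) < 1" by (simp add: divide_less_eq)
    qed (use \<delta> in auto)
    finally show ?thesis by simp
  qed
  have m: "m > 0"
  proof -
    have "emeasure \<mu> (ball s \<epsilon>) > 0" using s \<epsilon> by (auto simp: measure_support_def)
    then show ?thesis by (simp add: m_def emeasure_eq_measure)
  qed
  have M: "M \<ge> 0" by (simp add: M_def)
  have Kb0: "Kb \<ge> 0" using T0 by (simp add: Kb_def)
  have Kb1: "K - b \<ge> T\<^sup>2 / \<delta> + 1" using T0 unfolding K_def by linarith
  have T2d: "T\<^sup>2 / \<delta> \<ge> 0" using \<delta> by simp
  have KT: "K - T > 0" using T2d by (simp add: K_def)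
  have A0: "A > 0" unfolding A_def using Kb1 T2d \<delta> by linarith
  have B20: "B2 > 0"
  proof -
    have "K - b > 0" using Kb1 T2d by linarith
    then have "(K - b)\<^sup>2 > 0" by simp
    then show ?thesis unfolding B2_def by (simp add: add_pos_nonneg)
  qed
  have AB: "A\<^sup>2 > B2"
  proof -
    have "\<delta> * (K - b) \<ge> \<delta> * (T\<^sup>2 / \<delta> + 1)" using Kb1 \<delta> by (intro mult_left_mono) auto
    moreover have "\<delta> * (T\<^sup>2 / \<delta> + 1) = T\<^sup>2 + \<delta>" using \<delta> by (simp add: field_simps)
    ultimately have "\<delta> * (K - b) \<ge> T\<^sup>2 + \<delta>" by linarith
    moreover have "A\<^sup>2 = (K - b)\<^sup>2 + \<delta> * (K - b) + \<delta>\<^sup>2 / 4"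
      by (simp add: A_def power2_eq_square field_simps)
    moreover have "\<delta>\<^sup>2 / 4 \<ge> 0" by simp
    ultimately show ?thesis using \<delta> unfolding B2_def by linarith
  qed
  define r where "r = A\<^sup>2 / B2"
  have r1: "r > 1" using AB B20 by (simp add: r_def)
  obtain n where n: "Kb * M / ((\<delta> / 2) * m) < r ^ n" using real_arch_pow[OF r1] by blast
  have K0: "complex_of_real K \<noteq> 0" using KT T0 by simp
  obtain v where v: "v \<in> c00" "v \<noteq> (\<lambda>_. 0)" and Pv: "\<And>z. P v z = (of_real K - cnj a * z) ^ n"
    using poly_pow[OF K0, of "cnj a" n] by blast
  define q2 where "q2 z = (cmod (of_real K - cnj a * z))\<^sup>2" for z
  have w: "cmod (P v z) ^ 2 = q2 z ^ n" for z
    by (simp add: Pv q2_def norm_power power_mult[symmetric] mult.commute)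
  have q2eq: "q2 z = (K - inner a z)\<^sup>2 + (Im (cnj a * z))\<^sup>2" for z
    by (simp add: q2_def cmod_power2 re_cnj_inner[symmetric]) (simp add: power2_commute)
  have pw: "(inner a z - b) * q2 z ^ n \<le> - (\<delta> / 2) * (A\<^sup>2) ^ n * indicator (ball s \<epsilon>) z + Kb * B2 ^ n"
    if zL: "cmod z \<le> L" for z
  proof -
    have u: "\<bar>inner a z\<bar> \<le> T"
      using Cauchy_Schwarz_ineq2[of a z] zL by (simp add: T_def) (meson norm_ge_zero mult_left_mono order_trans)
    have y: "(Im (cnj a * z))\<^sup>2 \<le> T\<^sup>2"
    proof -
      have "\<bar>Im (cnj a * z)\<bar> \<le> T"
        using abs_Im_le_cmod[of "cnj a * z"] zL by (simp add: T_def norm_mult) (meson norm_ge_zero mult_left_mono order_trans)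
      then show ?thesis using T0 by (metis abs_ge_zero power2_abs power_mono)
    qed
    have q0: "q2 z \<ge> 0" by (simp add: q2_def)
    have B0: "B2 ^ n \<ge> 0" using B20 by simp
    show ?thesis
    proof (cases "z \<in> ball s \<epsilon>")
      case True
      have "inner a z - inner a s = inner a (z - s)" by (simp add: inner_diff_right)
      also have "\<dots> \<le> cmod a * cmod (z - s)" using Cauchy_Schwarz_ineq2[of a "z - s"] by simp
      also have "\<dots> \<le> cmod a * \<epsilon>" using True by (intro mult_left_mono) (auto simp: dist_norm norm_minus_commute)
      finally have "inner a z - inner a s \<le> cmod a * \<epsilon>" .
      then have ub: "inner a z < b - \<delta> / 2" using a\<epsilon> \<delta>_def by linarith
      then have "K - inner a z \<ge> A" by (simp add: A_def)
      then have "(K - inner a z)\<^sup>2 \<ge> A\<^sup>2" using A0 by (intro power_mono) auto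
      then have "q2 z \<ge> A\<^sup>2" using q2eq[of z] by (smt (verit) zero_le_power2)
      then have qn: "q2 z ^ n \<ge> (A\<^sup>2) ^ n" by (intro power_mono) auto
      have "(inner a z - b) * q2 z ^ n \<le> - (\<delta> / 2) * q2 z ^ n"
        using ub q0 by (intro mult_right_mono) auto
      also have "\<dots> \<le> - (\<delta> / 2) * (A\<^sup>2) ^ n" using qn \<delta> by simp
      moreover have "0 \<le> Kb * B2 ^ n" using Kb0 B0 by simp
      ultimately show ?thesis using True by simp
    next
      case False
      show ?thesis
      proof (cases "inner a z < b")
        case True
        have "(inner a z - b) * q2 z ^ n \<le> 0" using True q0 by (simp add: mult_nonpos_nonneg)
        moreover have "0 \<le> Kb * B2 ^ n" using Kb0 B0 by simp
        ultimately show ?thesis using False by simp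
      next
        case ge: False
        have "K - inner a z \<le> K - b" using ge by simp
        moreover have "K - inner a z \<ge> 0" using u KT by simp
        ultimately have "(K - inner a z)\<^sup>2 \<le> (K - b)\<^sup>2" by (intro power_mono) auto
        then have "q2 z \<le> B2" using q2eq[of z] y by (simp add: B2_def)
        then have qn: "q2 z ^ n \<le> B2 ^ n" using q0 by (intro power_mono) auto
        have "(inner a z - b) * q2 z ^ n \<le> Kb * q2 z ^ n"
          using u q0 by (intro mult_right_mono) (auto simp: Kb_def)
        also have "\<dots> \<le> Kb * B2 ^ n" using qn Kb0 by (intro mult_left_mono) auto
        finally show ?thesis using False by simp
      qed
    qed
  qed
  have i1: "integrable \<mu> (\<lambda>z. (inner a z - b) * q2 z ^ n)"
    unfolding q2_def by (rule int_cont) (intro continuous_intros)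
  have i2: "integrable \<mu> (\<lambda>z. - (\<delta> / 2) * (A\<^sup>2) ^ n * indicator (ball s \<epsilon>) z + Kb * B2 ^ n)"
    by (intro Bochner_Integration.integrable_add integrable_mult_right integrable_indicator integrable_const)
       (auto simp: emeasure_eq_measure)
  have "(\<integral>z. (inner a z - b) * q2 z ^ n \<partial>\<mu>) \<le> (\<integral>z. - (\<delta> / 2) * (A\<^sup>2) ^ n * indicator (ball s \<epsilon>) z + Kb * B2 ^ n \<partial>\<mu>)"
    by (rule integral_mono_AE[OF i1 i2]) (rule AE_mp[OF AE_cball], intro AE_I2 impI, rule pw, simp)
  also have "\<dots> = - (\<delta> / 2) * (A\<^sup>2) ^ n * m + Kb * B2 ^ n * M"
    using i2 by (subst Bochner_Integration.integral_add)
      (auto simp: m_def M_def emeasure_eq_measure intro!: integrable_mult_right integrable_indicator)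
  also have "\<dots> = B2 ^ n * (Kb * M - (\<delta> / 2) * m * r ^ n)"
    using B20 by (simp add: r_def power_divide field_simps)
  also have "\<dots> < 0"
  proof -
    have "Kb * M < r ^ n * ((\<delta> / 2) * m)" using n \<delta> m by (simp add: divide_less_eq)
    then show ?thesis using B20 by (intro mult_pos_neg) (auto simp: mult_ac)
  qed
  finally have neg: "(\<integral>z. (inner a z - b) * q2 z ^ n \<partial>\<mu>) < 0" .
  have "(\<integral>z. (inner a z - b) * q2 z ^ n \<partial>\<mu>) = (\<integral>z. cmod (P v z) ^ 2 * inner a z \<partial>\<mu>) - b * Nr v"
  proof -
    have j1: "integrable \<mu> (\<lambda>z. cmod (P v z) ^ 2 * inner a z)" by (rule int_cont) (intro continuous_intros)
    have j2: "integrable \<mu> (\<lambda>z. b * cmod (P v z) ^ 2)" by (rule int_cont) (intro continuous_intros)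
    have "(\<integral>z. (inner a z - b) * q2 z ^ n \<partial>\<mu>) = (\<integral>z. cmod (P v z) ^ 2 * inner a z - b * cmod (P v z) ^ 2 \<partial>\<mu>)"
      by (rule Bochner_Integration.integral_cong) (auto simp: w algebra_simps)
    also have "\<dots> = (\<integral>z. cmod (P v z) ^ 2 * inner a z \<partial>\<mu>) - (\<integral>z. b * cmod (P v z) ^ 2 \<partial>\<mu>)"
      by (rule Bochner_Integration.integral_diff[OF j1 j2])
    also have "(\<integral>z. b * cmod (P v z) ^ 2 \<partial>\<mu>) = b * Nr v" unfolding Nr_def by (rule integral_mult_right_zero)
    finally show ?thesis .
  qed
  then have "(\<integral>z. cmod (P v z) ^ 2 * inner a z \<partial>\<mu>) < b * Nr v" using neg by linarith
  then have "inner a (R v) < b" using Nr_pos[OF v] unfolding inner_R[OF v] by (simp add: divide_less_eq)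
  then show ?thesis using v by blast
qed

end

context M1 begin

lemma expand:
  assumes x: "x \<in> c00" and y: "y \<in> c00" and \<psi>: "continuous_on UNIV \<psi>"
  shows "(\<integral>z. \<psi> z * P (\<lambda>i. \<alpha> * x i + \<beta> * y i) z * cnj (P (\<lambda>i. \<alpha> * x i + \<beta> * y i) z) \<partial>\<mu>)
    = \<alpha> * cnj \<alpha> * (\<integral>z. \<psi> z * P x z * cnj (P x z) \<partial>\<mu>) + \<beta> * cnj \<beta> * (\<integral>z. \<psi> z * P y z * cnj (P y z) \<partial>\<mu>)
      + \<alpha> * cnj \<beta> * (\<integral>z. \<psi> z * P x z * cnj (P y z) \<partial>\<mu>) + cnj \<alpha> * \<beta> * (\<integral>z. \<psi> z * cnj (P x z) * P y z \<partial>\<mu>)"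
proof -
  define f1 where "f1 z = \<psi> z * P x z * cnj (P x z)" for z
  define f2 where "f2 z = \<psi> z * P y z * cnj (P y z)" for z
  define f3 where "f3 z = \<psi> z * P x z * cnj (P y z)" for z
  define f4 where "f4 z = \<psi> z * cnj (P x z) * P y z" for z
  have i1: "integrable \<mu> f1" unfolding f1_def by (rule int_cont) (use \<psi> in \<open>intro continuous_intros\<close>)
  have i2: "integrable \<mu> f2" unfolding f2_def by (rule int_cont) (use \<psi> in \<open>intro continuous_intros\<close>)
  have i3: "integrable \<mu> f3" unfolding f3_def by (rule int_cont) (use \<psi> in \<open>intro continuous_intros\<close>)
  have i4: "integrable \<mu> f4" unfolding f4_def by (rule int_cont) (use \<psi> in \<open>intro continuous_intros\<close>)
  have pw: "\<psi> z * P (\<lambda>i. \<alpha> * x i + \<beta> * y i) z * cnj (P (\<lambda>i. \<alpha> * x i + \<beta> * y i) z)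
     = \<alpha> * cnj \<alpha> * f1 z + \<beta> * cnj \<beta> * f2 z + \<alpha> * cnj \<beta> * f3 z + cnj \<alpha> * \<beta> * f4 z" for z
    unfolding P_lin[OF x y] f1_def f2_def f3_def f4_def by (simp add: algebra_simps)
  have "(\<integral>z. \<psi> z * P (\<lambda>i. \<alpha> * x i + \<beta> * y i) z * cnj (P (\<lambda>i. \<alpha> * x i + \<beta> * y i) z) \<partial>\<mu>)
     = (\<integral>z. \<alpha> * cnj \<alpha> * f1 z + \<beta> * cnj \<beta> * f2 z + \<alpha> * cnj \<beta> * f3 z + cnj \<alpha> * \<beta> * f4 z \<partial>\<mu>)"
    by (simp only: pw)
  also have "\<dots> = \<alpha> * cnj \<alpha> * integral\<^sup>L \<mu> f1 + \<beta> * cnj \<beta> * integral\<^sup>L \<mu> f2 + \<alpha> * cnj \<beta> * integral\<^sup>L \<mu> f3 + cnj \<alpha> * \<beta> * integral\<^sup>L \<mu> f4"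
    using i1 i2 i3 i4 by (simp add: Bochner_Integration.integral_add integrable_mult_right)
  finally show ?thesis unfolding f1_def f2_def f3_def f4_def .
qed

lemma R_alt: "R v = Ac v / (\<integral>z. P v z * cnj (P v z) \<partial>\<mu>)"
  by (simp add: R_def Nc)

lemma R_scale:
  assumes x: "x \<in> c00" and l: "l \<noteq> 0"
  shows "R (\<lambda>i. l * x i) = R x"
proof -
  have e: "(\<lambda>i. l * x i) = (\<lambda>i. l * x i + 0 * x i)" by simp
  have c1: "continuous_on UNIV (\<lambda>z::complex. 1::complex)" by (intro continuous_intros)
  have c2: "continuous_on UNIV (\<lambda>z::complex. z)" by (intro continuous_intros)
  have N: "(\<integral>z. P (\<lambda>i. l * x i) z * cnj (P (\<lambda>i. l * x i) z) \<partial>\<mu>) = l * cnj l * (\<integral>z. P x z * cnj (P x z) \<partial>\<mu>)"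
    using expand[OF x x c1, of l 0] by (simp only: e) simp
  have A: "Ac (\<lambda>i. l * x i) = l * cnj l * Ac x"
    using expand[OF x x c2, of l 0] unfolding Ac_def by (simp only: e) simp
  have "l * cnj l \<noteq> 0" using l by simp
  then show ?thesis unfolding R_alt N A by simp
qed

end

lemma unit_phase: "\<exists>c::complex. c * cnj c = 1 \<and> Im (cnj c * \<gamma>) = 0"
proof (cases "\<gamma> = 0")
  case True then show ?thesis by (intro exI[of _ 1]) simp
next
  case False
  define c where "c = \<gamma> / of_real (cmod \<gamma>)"
  have n: "cmod \<gamma> \<noteq> 0" using False by simp
  have g: "\<gamma> * cnj \<gamma> = of_real (cmod \<gamma>) * of_real (cmod \<gamma>)"
    by (metis complex_norm_square of_real_mult power2_eq_square)
  have "c * cnj c = (\<gamma> * cnj \<gamma>) / (of_real (cmod \<gamma>) * of_real (cmod \<gamma>))"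
    by (simp add: c_def)
  also have "\<dots> = 1" using n by (simp add: g)
  finally have 1: "c * cnj c = 1" .
  have "cnj c * \<gamma> = (\<gamma> * cnj \<gamma>) / of_real (cmod \<gamma>)" by (simp add: c_def mult.commute)
  also have "\<dots> = of_real (cmod \<gamma>)" using n by (simp add: g)
  finally have "Im (cnj c * \<gamma>) = 0" by simp
  with 1 show ?thesis by blast
qed

lemma key_alg:
  fixes a s c Ax Ay Axy Ayx Nx Ny Nxy Nyx w1 w2 :: complex
  assumes Ax: "Ax = w1 * Nx" and Ay: "Ay = w2 * Ny" and cc: "c * cnj c = 1"
    and cs: "cnj s = s" and d: "w2 - w1 \<noteq> 0"
  shows "(a * a * Ax + (s * c) * cnj (s * c) * Ay + a * cnj (s * c) * Axy + a * (s * c) * Ayx)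
     - w1 * (a * a * Nx + (s * c) * cnj (s * c) * Ny + a * cnj (s * c) * Nxy + a * (s * c) * Nyx)
     = (w2 - w1) * (s * s * Ny + a * s * (cnj c * ((Axy - w1 * Nxy) / (w2 - w1)) + c * ((Ayx - w1 * Nyx) / (w2 - w1))))"
proof -
  define p where "p = (Axy - w1 * Nxy) / (w2 - w1)"
  define q where "q = (Ayx - w1 * Nyx) / (w2 - w1)"
  have p: "Axy = w1 * Nxy + (w2 - w1) * p" using d by (simp add: p_def)
  have q: "Ayx = w1 * Nyx + (w2 - w1) * q" using d by (simp add: q_def)
  have e: "(s * c) * cnj (s * c) = s * s" using cc cs by (simp add: mult_ac)
  show ?thesis unfolding p_def[symmetric] q_def[symmetric] e unfolding Ax Ay p q using cs
    by (simp add: algebra_simps)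
qed

lemma re_alg:
  fixes c Nxy Nyx :: complex and ar sr nx ny :: real
  assumes cc: "c * cnj c = 1"
  shows "Re (of_real ar * of_real ar * of_real nx + (of_real sr * c) * cnj (of_real sr * c) * of_real ny
     + of_real ar * cnj (of_real sr * c) * Nxy + of_real ar * (of_real sr * c) * Nyx)
     = ar\<^sup>2 * nx + sr\<^sup>2 * ny + ar * sr * Re (cnj c * Nxy + c * Nyx)"
proof -
  have e: "(of_real sr * c) * cnj (of_real sr * c) = of_real (sr * sr)" using cc by (simp add: mult_ac)
  have f: "of_real ar * cnj (of_real sr * c) * Nxy + of_real ar * (of_real sr * c) * Nyx
     = of_real (ar * sr) * (cnj c * Nxy + c * Nyx)" by (simp add: algebra_simps)
  show ?thesis unfolding e add.assoc[symmetric] unfolding add.assoc f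
    by (simp add: power2_eq_square)
qed

context M1 begin

lemma Nc_of_real: "(\<integral>z. P v z * cnj (P v z) \<partial>\<mu>) = of_real (Nr v)" by (rule Nc)

lemma vs_nonzero:
  assumes x: "x \<in> c00" "x \<noteq> (\<lambda>_. 0)" and y: "y \<in> c00" "y \<noteq> (\<lambda>_. 0)"
    and ne: "R x \<noteq> R y" and c: "c \<noteq> 0" and s: "0 \<le> s" "s \<le> 1"
  shows "(\<lambda>i. of_real (1 - s) * x i + (of_real s * c) * y i) \<noteq> (\<lambda>_. 0)"
proof
  assume z: "(\<lambda>i. of_real (1 - s) * x i + (of_real s * c) * y i) = (\<lambda>_. 0)"
  then have zi: "of_real (1 - s) * x i + (of_real s * c) * y i = 0" for i by meson
  show False
  proof (cases "s = 0")
    case True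
    then have "x = (\<lambda>_. 0)" using zi by auto
    then show False using x by simp
  next
    case False
    define l where "l = - of_real (1 - s) / (of_real s * c)"
    have sc: "of_real s * c \<noteq> 0" using False c by simp
    have yl: "y i = l * x i" for i
      using zi[of i] sc by (simp add: l_def field_simps add_eq_0_iff)
    then have yeq: "y = (\<lambda>i. l * x i)" by auto
    have "l \<noteq> 0"
    proof
      assume "l = 0"
      then have "y = (\<lambda>_. 0)" using yeq by simp
      then show False using y by simp
    qed
    then have "R y = R x" unfolding yeq by (rule R_scale[OF x(1)])
    then show False using ne by simp
  qed
qed

lemma convex_comb:
  assumes x: "x \<in> c00" "x \<noteq> (\<lambda>_. 0)" and y: "y \<in> c00" "y \<noteq> (\<lambda>_. 0)"
    and t: "0 \<le> t" "t \<le> 1"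
  shows "\<exists>v\<in>c00. v \<noteq> (\<lambda>_. 0) \<and> R v = of_real (1 - t) * R x + of_real t * R y"
proof (cases "R x = R y")
  case True
  have "R x = of_real (1 - t) * R x + of_real t * R y" unfolding True by (simp add: algebra_simps)
  then show ?thesis using x by blast
next
  case ne: False
  define w1 where "w1 = R x"
  define w2 where "w2 = R y"
  define d where "d = w2 - w1"
  have d: "w2 - w1 \<noteq> 0" using ne by (simp add: w1_def w2_def)
  define Nx where "Nx = (\<integral>z. P x z * cnj (P x z) \<partial>\<mu>)"
  define Ny where "Ny = (\<integral>z. P y z * cnj (P y z) \<partial>\<mu>)"
  define Nxy where "Nxy = (\<integral>z. P x z * cnj (P y z) \<partial>\<mu>)"
  define Nyx where "Nyx = (\<integral>z. cnj (P x z) * P y z \<partial>\<mu>)"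
  define Axy where "Axy = (\<integral>z. z * P x z * cnj (P y z) \<partial>\<mu>)"
  define Ayx where "Ayx = (\<integral>z. z * cnj (P x z) * P y z \<partial>\<mu>)"
  have Nx: "Nx = of_real (Nr x)" unfolding Nx_def by (rule Nc)
  have Ny: "Ny = of_real (Nr y)" unfolding Ny_def by (rule Nc)
  have Nrx: "Nr x > 0" by (rule Nr_pos[OF x])
  have Nry: "Nr y > 0" by (rule Nr_pos[OF y])
  have Ax: "Ac x = w1 * Nx" using Nrx unfolding w1_def R_def Nx by simp
  have Ay: "Ac y = w2 * Ny" using Nry unfolding w2_def R_def Ny by simp
  define \<gamma> where "\<gamma> = (Axy - w1 * Nxy) / (w2 - w1) - cnj ((Ayx - w1 * Nyx) / (w2 - w1))"
  obtain c where cc: "c * cnj c = 1" and cg: "Im (cnj c * \<gamma>) = 0" using unit_phase by blast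
  have c0: "c \<noteq> 0" using cc by auto
  define K0 where "K0 = cnj c * ((Axy - w1 * Nxy) / (w2 - w1)) + c * ((Ayx - w1 * Nyx) / (w2 - w1))"
  have ImK0: "Im K0 = 0"
  proof -
    define p where "p = (Axy - w1 * Nxy) / (w2 - w1)"
    define q where "q = (Ayx - w1 * Nyx) / (w2 - w1)"
    have "cnj c * \<gamma> = cnj c * p - cnj (c * q)" unfolding \<gamma>_def p_def[symmetric] q_def[symmetric]
      by (simp add: right_diff_distrib)
    then have "Im (cnj c * \<gamma>) = Im (cnj c * p) + Im (c * q)" by simp
    moreover have "K0 = cnj c * p + c * q" unfolding K0_def p_def q_def ..
    ultimately have "Im K0 = Im (cnj c * \<gamma>)" by simp
    then show ?thesis using cg by simp
  qed
  define \<kappa> where "\<kappa> = Re K0"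
  have K0r: "K0 = of_real \<kappa>" using ImK0 by (simp add: \<kappa>_def complex_eq_iff)
  define lam where "lam = Re (cnj c * Nxy + c * Nyx)"
  define v where "v s = (\<lambda>i. of_real (1 - s) * x i + (of_real s * c) * y i)" for s :: real
  define D where "D s = (1 - s)\<^sup>2 * Nr x + s\<^sup>2 * Nr y + (1 - s) * s * lam" for s :: real
  define Num where "Num s = s\<^sup>2 * Nr y + (1 - s) * s * \<kappa>" for s :: real
  have c1: "continuous_on UNIV (\<lambda>z::complex. 1::complex)" by (intro continuous_intros)
  have c2: "continuous_on UNIV (\<lambda>z::complex. z)" by (intro continuous_intros)
  have vc: "v s \<in> c00" for s unfolding v_def by (rule c00_lin[OF x(1) y(1)])
  have expN: "(\<integral>z. P (v s) z * cnj (P (v s) z) \<partial>\<mu>) =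
     of_real (1 - s) * cnj (of_real (1 - s)) * Nx + (of_real s * c) * cnj (of_real s * c) * Ny
     + of_real (1 - s) * cnj (of_real s * c) * Nxy + cnj (of_real (1 - s)) * (of_real s * c) * Nyx" for s
    using expand[OF x(1) y(1) c1, of "of_real (1 - s)" "of_real s * c"]
    unfolding v_def Nx_def Ny_def Nxy_def Nyx_def mult_1 .
  have expA: "Ac (v s) =
     of_real (1 - s) * cnj (of_real (1 - s)) * Ac x + (of_real s * c) * cnj (of_real s * c) * Ac y
     + of_real (1 - s) * cnj (of_real s * c) * Axy + cnj (of_real (1 - s)) * (of_real s * c) * Ayx" for s
    using expand[OF x(1) y(1) c2, of "of_real (1 - s)" "of_real s * c"]
    unfolding v_def Ac_def Axy_def Ayx_def .
  have Dr: "Nr (v s) = D s" for s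
  proof -
    have "of_real (Nr (v s)) = of_real (1 - s) * of_real (1 - s) * of_real (Nr x) + (of_real s * c) * cnj (of_real s * c) * of_real (Nr y)
     + of_real (1 - s) * cnj (of_real s * c) * Nxy + of_real (1 - s) * (of_real s * c) * Nyx"
      using expN[of s] Nc[of "v s"] unfolding Nx Ny complex_cnj_complex_of_real by simp
    then have "Nr (v s) = Re (of_real (1 - s) * of_real (1 - s) * of_real (Nr x) + (of_real s * c) * cnj (of_real s * c) * of_real (Nr y)
     + of_real (1 - s) * cnj (of_real s * c) * Nxy + of_real (1 - s) * (of_real s * c) * Nyx)"
      by (metis Re_complex_of_real)
    also have "\<dots> = D s" unfolding re_alg[OF cc] D_def lam_def ..
    finally show ?thesis .
  qed
  have Dpos: "D s > 0" if "0 \<le> s" "s \<le> 1" for s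
    unfolding Dr[symmetric] by (rule Nr_pos[OF vc vs_nonzero[OF x y ne c0 that, folded v_def]])
  have key: "Ac (v s) - w1 * of_real (D s) = (w2 - w1) * of_real (Num s)" for s
  proof -
    have "of_real (D s) = (\<integral>z. P (v s) z * cnj (P (v s) z) \<partial>\<mu>)" using Nc[of "v s"] Dr[of s] by simp
    then have "Ac (v s) - w1 * of_real (D s) =
       (w2 - w1) * (of_real s * of_real s * Ny + of_real (1 - s) * of_real s * K0)"
      unfolding expA expN complex_cnj_complex_of_real K0_def
      by (rule ssubst) (rule key_alg[OF Ax Ay cc _ d], simp)
    also have "\<dots> = (w2 - w1) * of_real (Num s)"
      by (simp add: Num_def Ny K0r power2_eq_square)
    finally show ?thesis .
  qed
  define h where "h s = Num s / D s" for s
  have h0: "h 0 = 0" by (simp add: h_def Num_def)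
  have h1: "h 1 = 1" using Nry by (simp add: h_def Num_def D_def)
  have hc: "continuous_on {0..1} h"
  proof -
    have cN: "continuous_on {0..1} Num" unfolding Num_def by (intro continuous_intros)
    have cD: "continuous_on {0..1} D" unfolding D_def by (intro continuous_intros)
    have "continuous_on {0..1} (\<lambda>s. Num s / D s)"
      by (rule continuous_on_divide[OF cN cD]) (use Dpos in force)
    then show ?thesis by (simp add: h_def[abs_def])
  qed
  obtain s where s: "0 \<le> s" "s \<le> 1" "h s = t"
    using IVT'[of h 0 t 1] h0 h1 t hc by auto
  have Ds: "D s > 0" by (rule Dpos[OF s(1,2)])
  have "R (v s) = Ac (v s) / of_real (D s)" by (simp add: R_def Dr)
  also have "\<dots> = (w1 * of_real (D s) + (w2 - w1) * of_real (Num s)) / of_real (D s)"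
    using key[of s] by (simp add: algebra_simps)
  also have "\<dots> = w1 + (w2 - w1) * of_real (h s)" using Ds by (simp add: h_def field_simps)
  also have "\<dots> = of_real (1 - t) * R x + of_real t * R y"
    using s(3) by (simp add: w1_def w2_def algebra_simps)
  finally show ?thesis
    using vc[of s] vs_nonzero[OF x y ne c0 s(1,2)] unfolding v_def by blast
qed

end

lemma fin_from_int:
  assumes "integrable \<mu> (\<lambda>z::complex. (1::real))" and "sets \<mu> = sets borel"
  shows "emeasure \<mu> UNIV < \<infinity>"
proof -
  have "(\<integral>\<^sup>+ z. ennreal (norm (1::real)) \<partial>\<mu>) < \<infinity>" using assms(1) by (simp add: integrable_iff_bounded)
  then have "emeasure \<mu> (space \<mu>) < \<infinity>" by simp
  moreover have "space \<mu> = UNIV" using sets_eq_imp_space_eq[OF assms(2)] by simp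
  ultimately show ?thesis by simp
qed

theorem theorem2:
  fixes \<mu> :: "complex measure"
  assumes borel: "sets \<mu> = sets borel"
    and inf_supp: "infinite (measure_support \<mu>)"
    and moments: "\<forall>n. integrable \<mu> (\<lambda>z. cmod z ^ n)"
    and growth: "\<exists>L::real. (\<lambda>n. root (2 * n) (Re (cmoment \<mu> n n))) \<longlonglongrightarrow> L"
  shows "closure {quad_form (\<lambda>i j. cmoment \<mu> (Suc i) j) v / quad_form (cmoment \<mu>) v
                   | v. v \<in> c00 \<and> v \<noteq> (\<lambda>_. 0)}
         = convex hull (measure_support \<mu>)"
proof -
  obtain L where lim: "(\<lambda>n. root (2 * n) (Re (cmoment \<mu> n n))) \<longlonglongrightarrow> L" using growth by blast
  have "integrable \<mu> (\<lambda>z::complex. (1::real))" using moments[rule_format, of 0] by simp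
  then have fin: "emeasure \<mu> UNIV < \<infinity>" by (rule fin_from_int[OF _ borel])
  interpret M0 \<mu> by standard (rule borel, rule fin)
  have bnd: "measure_support \<mu> \<subseteq> cball 0 L" by (rule supp_bounded[OF moments lim])
  interpret M1 \<mu> L by standard (rule bnd, rule inf_supp)
  define W where "W = {R v | v. v \<in> c00 \<and> v \<noteq> (\<lambda>_. 0)}"
  have eqW: "{quad_form (\<lambda>i j. cmoment \<mu> (Suc i) j) v / quad_form (cmoment \<mu>) v
                   | v. v \<in> c00 \<and> v \<noteq> (\<lambda>_. 0)} = W"
  proof -
    have "quad_form (\<lambda>i j. cmoment \<mu> (Suc i) j) v / quad_form (cmoment \<mu>) v = R v" if "v \<in> c00" for v
      using qf_A[OF that] qf_N[OF that] by (simp add: R_def)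
    then show ?thesis unfolding W_def by (intro Collect_cong) (smt (verit))
  qed
  define H where "H = convex hull (measure_support \<mu>)"
  have WH: "W \<subseteq> H" unfolding W_def H_def using R_in_hull by auto
  have Hc: "closed H" unfolding H_def by (rule compact_imp_closed[OF hull_compact])
  have cW: "convex W" unfolding convex_def
  proof (intro ballI allI impI)
    fix p q :: complex and u w :: real
    assume p: "p \<in> W" and q: "q \<in> W" and u: "0 \<le> u" and w: "0 \<le> w" and uw: "u + w = 1"
    obtain x where x: "x \<in> c00" "x \<noteq> (\<lambda>_. 0)" "p = R x" using p unfolding W_def by blast
    obtain y where y: "y \<in> c00" "y \<noteq> (\<lambda>_. 0)" "q = R y" using q unfolding W_def by blast
    have t: "0 \<le> w" "w \<le> 1" using u w uw by auto
    obtain v where v: "v \<in> c00" "v \<noteq> (\<lambda>_. 0)" "R v = of_real (1 - w) * R x + of_real w * R y"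
      using convex_comb[OF x(1,2) y(1,2) t] by blast
    have uu: "u = 1 - w" using uw by simp
    have "u *\<^sub>R p + w *\<^sub>R q = R v" unfolding uu v(3) x(3) y(3) scaleR_conv_of_real by simp
    then show "u *\<^sub>R p + w *\<^sub>R q \<in> W" unfolding W_def using v by blast
  qed
  have HW: "H \<subseteq> closure W"
  proof
    fix z assume zH: "z \<in> H"
    show "z \<in> closure W"
    proof (rule ccontr)
      assume nz: "z \<notin> closure W"
      obtain a b where ab: "inner a z < b" "\<forall>x\<in>closure W. inner a x > b"
        using separating_hyperplane_closed_point[OF convex_closure[OF cW] closed_closure nz] by auto
      have "\<exists>s\<in>measure_support \<mu>. inner a s < b"
      proof (rule ccontr)
        assume "\<not> (\<exists>s\<in>measure_support \<mu>. inner a s < b)"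
        then have "measure_support \<mu> \<subseteq> {x. inner a x \<ge> b}" by (auto simp: not_less)
        then have "H \<subseteq> {x. inner a x \<ge> b}" unfolding H_def by (rule hull_minimal) (rule convex_halfspace_ge)
        then have "inner a z \<ge> b" using zH by blast
        then show False using ab(1) by simp
      qed
      then obtain s where s: "s \<in> measure_support \<mu>" "inner a s < b" by blast
      obtain v where v: "v \<in> c00" "v \<noteq> (\<lambda>_. 0)" "inner a (R v) < b" using peak[OF s] by blast
      have "R v \<in> W" unfolding W_def using v(1,2) by blast
      then have "R v \<in> closure W" by (rule closure_subset[THEN subsetD])
      then show False using ab(2) v(3) by auto
    qed
  qed
  have "closure W = H"
    using HW closure_minimal[OF WH Hc] by auto
  then show ?thesis unfolding eqW H_def .
qed

end
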